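(* Let $N>0$, $m>0$, $F>0$, $\alpha>0$, $w>0$, $\tau\in(0,1)$, $g\geq 0$, $L_g\geq 0$, and define \[ L=\frac{N\left[(1-\tau)(mL_g+\alpha F)+(mg+F)mN\right]}{\alpha+(Nm-\alpha)\tau},\qquad q=\frac{(1-\tau)(L+L_g-\alpha g)}{\left(Nm+\alpha(1-\tau)\right)(L+L_g)}, \] \[ p=\frac{L+L_g}{L+L_g-\alpha g}\left(mw+\frac{\alpha(1-\tau)w}{N}\right). \] If $Nm>\alpha$, then $L+L_g-\alpha\left((L+L_g)q+g\right)>0$, and the price $p$ is positive.
   Context: These are the symmetric-equilibrium quantities of a monopolistic-competition general equilibrium model: $N$ is the measure of firms (= varieties), $m$ and $F$ the marginal and fixed labor inputs, $\alpha$ the CARA utility parameter, $w$ the nominal wage, $\tau$ the proportional income tax rate, $g$ the government purchase of each variety, $L_g$ government employment, $L$ private employment, $q$ per-capita consumption of each variety, and $p$ the common price. They satisfy $L=N[m(L+L_g)q+mg+F]$, $q=(1-\tau)w/(Np)$, and equivalently $p=mw(L+L_g)/\left(L+L_g-\alpha((L+L_g)q+g)\right)$. *)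

theory Defs
  imports Complex_Main
begin

end

theory Submission
  imports Defs
begin

theorem proposition2:
  fixes N m F \<alpha> w \<tau> g L\<^sub>g L q p :: real
  assumes "N > 0" and "m > 0" and "F > 0" and "\<alpha> > 0" and "w > 0"
    and "0 < \<tau>" and "\<tau> < 1" and "g \<ge> 0" and "L\<^sub>g \<ge> 0"
    and L_def: "L = N * ((1 - \<tau>) * (m * L\<^sub>g + \<alpha> * F) + (m * g + F) * m * N) / (\<alpha> + (N * m - \<alpha>) * \<tau>)"
    and q_def: "q = (1 - \<tau>) * (L + L\<^sub>g - \<alpha> * g) / ((N * m + \<alpha> * (1 - \<tau>)) * (L + L\<^sub>g))"
    and p_def: "p = (L + L\<^sub>g) / (L + L\<^sub>g - \<alpha> * g) * (m * w + \<alpha> * (1 - \<tau>) * w / N)"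
    and "N * m > \<alpha>"
  shows "L + L\<^sub>g - \<alpha> * ((L + L\<^sub>g) * q + g) > 0 \<and> p > 0"
proof -
  define den where "den = \<alpha> + (N * m - \<alpha>) * \<tau>"
  have den: "den > 0" using assms unfolding den_def by (smt (verit) mult_pos_pos)
  have dle: "den \<le> N * m" unfolding den_def using assms
    by (smt (verit) mult_left_mono mult_le_cancel_left1)
  have Lden: "L * den = N * ((1 - \<tau>) * (m * L\<^sub>g + \<alpha> * F) + (m * g + F) * m * N)"
    using L_def den by (simp add: den_def)
  have t1: "N * ((1 - \<tau>) * (m * L\<^sub>g + \<alpha> * F)) \<ge> 0" using assms by simp
  have t2: "N * (F * m * N) > 0" using assms by simp
  have t3: "\<alpha> * g * den \<le> N * (m * g * m * N)"
  proof -
    have "\<alpha> * g * den \<le> \<alpha> * g * (N * m)" using dle assms by (simp add: mult_left_mono)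
    also have "\<dots> \<le> (N*m) * g * (N * m)" using assms
      by (simp add: mult_right_mono)
    finally show ?thesis by (simp add: algebra_simps)
  qed
  have "(L - \<alpha> * g) * den > 0"
    using Lden t1 t2 t3 by (simp add: algebra_simps)
  hence A: "L - \<alpha> * g > 0" using den by (simp add: zero_less_mult_iff)
  define S where "S = L + L\<^sub>g"
  have Spos: "S > 0" "S - \<alpha> * g > 0" using A assms unfolding S_def
    by (smt (verit) mult_nonneg_nonneg)+
  define D where "D = N * m + \<alpha> * (1 - \<tau>)"
  have Dpos: "D > 0" using assms unfolding D_def by (smt (verit) mult_pos_pos)
  have "S - \<alpha> * (S * q + g) = (S - \<alpha> * g) * (N * m) / D"
  proof -
    have qS: "S * q = (1 - \<tau>) * (S - \<alpha> * g) / D"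
      using Spos Dpos unfolding q_def S_def[symmetric] D_def[symmetric] by simp
    have "S - \<alpha> * (S * q + g) = (S - \<alpha> * g) * (D - \<alpha> * (1 - \<tau>)) / D"
      unfolding qS using Dpos by (simp add: field_simps)
    also have "D - \<alpha> * (1 - \<tau>) = N * m" unfolding D_def by simp
    finally show ?thesis .
  qed
  moreover have "(S - \<alpha> * g) * (N * m) / D > 0" using Spos Dpos assms by simp
  moreover have "p > 0" unfolding p_def S_def[symmetric] using Spos assms
    by (intro mult_pos_pos divide_pos_pos add_pos_nonneg) auto
  ultimately show ?thesis unfolding S_def by simp
qed

end
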